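(* Let $n\ge3$ be odd, let $d,R\in\mathbb{Z}$ with $d\ne0$, $R$ not a square, $\gcd(d,R)=1$, and $D=d^2-R$. Suppose that for each prime divisor $p$ of $n$ there is a prime $q\ge3$ such that $v_q(D)$ is odd and $v_q(D)\not\equiv0\pmod p$. Then $f_n=f_n(Z,d,R)$ is irreducible in $\mathbb{Q}[Z]$.
   Context: $v_q$ denotes the $q$-adic valuation on $\mathbb{Q}\setminus\{0\}$. $f_n(Z,d,R)=\sum_{j=0}^{(n-1)/2}(-1)^j\frac{n}{n-j}\binom{n-j}{j}D^jZ^{n-2j}-2dD^{(n-1)/2}$, which equals $\sqrt D^{\,n}F_n(Z/\sqrt D)-2dD^{(n-1)/2}$ where $F_n(Z)=2T_n(Z/2)$ and $T_n$ is the Chebyshev polynomial of the first kind. *)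

theory Defs
  imports "HOL-Computational_Algebra.Computational_Algebra"
begin

definition fpoly :: "nat \<Rightarrow> int \<Rightarrow> int \<Rightarrow> rat poly" where
  "fpoly n d R =
     (let D = d^2 - R in
       (\<Sum>j\<in>{0..(n - 1) div 2}.
          monom ((-1)^j * (of_nat n / of_nat (n - j)) * of_nat ((n - j) choose j)
                 * (of_int D)^j) (n - 2*j))
       - [: of_int (2 * d * D ^ ((n - 1) div 2)) :])"

end

theory Submission
  imports Defs
begin


lemma md: "prime (q::int) \<Longrightarrow> x \<noteq> 0 \<Longrightarrow> y \<noteq> 0 \<Longrightarrow> multiplicity q (x * y) = multiplicity q x + multiplicity q y"
  by (rule prime_elem_multiplicity_mult_distrib) (auto intro: prime_imp_prime_elem)

definition vq :: "int \<Rightarrow> rat \<Rightarrow> int" where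
  "vq q x = int (multiplicity q (fst (quotient_of x))) - int (multiplicity q (snd (quotient_of x)))"

lemma vq_frac:
  fixes q a b :: int
  assumes q: "prime q" and a: "a \<noteq> 0" and b: "b \<noteq> 0"
  shows "vq q (of_int a / of_int b) = int (multiplicity q a) - int (multiplicity q b)"
proof -
  obtain a' b' where qo: "quotient_of (of_int a / of_int b) = (a', b')" by (cases "quotient_of (of_int a / of_int b)")
  have b'pos: "b' > 0" using quotient_of_denom_pos' qo by (metis snd_conv)
  have eq: "(of_int a / of_int b :: rat) = of_int a' / of_int b'" using quotient_of_div[OF qo] .
  have a'0: "a' \<noteq> 0" using eq a b b'pos by auto
  have "of_int (a' * b) = (of_int (a * b') :: rat)" using eq b b'pos
    by (simp add: field_simps)
  hence e2: "a' * b = a * b'" by (simp only: of_int_eq_iff)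
  have "multiplicity q (a' * b) = multiplicity q (a * b')" using e2 by simp
  hence "multiplicity q a' + multiplicity q b = multiplicity q a + multiplicity q b'"
    using q a'0 b a b'pos by (simp add: md)
  thus ?thesis unfolding vq_def qo by simp
qed

lemma vq_of_int: "prime (q::int) \<Longrightarrow> a \<noteq> 0 \<Longrightarrow> vq q (of_int a) = int (multiplicity q a)"
  using vq_frac[of q a 1] by simp

lemma rat_frac_obtain:
  fixes x :: rat
  obtains a b where "x = of_int a / of_int b" "b > 0" "x \<noteq> 0 \<Longrightarrow> a \<noteq> 0"
proof -
  obtain a b where qo: "quotient_of x = (a,b)" by (cases "quotient_of x")
  have "b > 0" using quotient_of_denom_pos' qo by (metis snd_conv)
  moreover have "x = of_int a / of_int b" using quotient_of_div[OF qo] .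
  ultimately show ?thesis using that by auto
qed

lemma vq_mult:
  fixes q :: int
  assumes q: "prime q" and x: "x \<noteq> 0" and y: "y \<noteq> 0"
  shows "vq q (x * y) = vq q x + vq q y"
proof -
  obtain a b where ab: "x = of_int a / of_int b" "b > 0" "a \<noteq> 0" using rat_frac_obtain x by metis
  obtain c d where cd: "y = of_int c / of_int d" "d > 0" "c \<noteq> 0" using rat_frac_obtain y by metis
  have "x * y = of_int (a*c) / of_int (b*d)" using ab cd by simp
  hence "vq q (x*y) = int (multiplicity q (a*c)) - int (multiplicity q (b*d))"
    using vq_frac[OF q, of "a*c" "b*d"] ab cd by simp
  also have "\<dots> = vq q x + vq q y"
    using ab cd q vq_frac[OF q, of a b] vq_frac[OF q, of c d]
    by (simp add: md)
  finally show ?thesis .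
qed

lemma mult_add_ge:
  fixes q u w :: int
  assumes q: "prime q" and "u + w \<noteq> 0"
  shows "min (multiplicity q u) (multiplicity q w) \<le> multiplicity q (u + w)"
proof -
  define t where "t = min (multiplicity q u) (multiplicity q w)"
  have "q ^ t dvd u" unfolding t_def by (rule multiplicity_dvd') simp
  moreover have "q ^ t dvd w" unfolding t_def by (rule multiplicity_dvd') simp
  ultimately have "q ^ t dvd u + w" by simp
  hence "t \<le> multiplicity q (u + w)"
    using multiplicity_geI[of "u+w" q t] assms(2) q not_prime_unit by blast
  thus ?thesis unfolding t_def .
qed

lemma vq_add:
  fixes q :: int
  assumes q: "prime q" and x: "x \<noteq> 0" and y: "y \<noteq> 0" and xy: "x + y \<noteq> 0"
  shows "min (vq q x) (vq q y) \<le> vq q (x + y)"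
proof -
  obtain a b where ab: "x = of_int a / of_int b" "b > 0" "a \<noteq> 0" using rat_frac_obtain x by metis
  obtain c d where cd: "y = of_int c / of_int d" "d > 0" "c \<noteq> 0" using rat_frac_obtain y by metis
  have bd: "(of_int b :: rat) \<noteq> 0" "(of_int d :: rat) \<noteq> 0" using ab cd by auto
  have e: "x + y = of_int (a*d + c*b) / of_int (b*d)"
    unfolding ab(1) cd(1) add_frac_eq[OF bd] by simp
  have nz: "a*d + c*b \<noteq> 0"
  proof
    assume "a*d + c*b = 0"
    hence "(of_int (a*d + c*b) :: rat) = 0" by simp
    thus False using e xy by simp
  qed
  have v1: "vq q (x+y) = int (multiplicity q (a*d + c*b)) - int (multiplicity q b) - int (multiplicity q d)"
    using vq_frac[OF q nz, of "b*d"] e ab cd q by (simp add: md)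
  have m: "min (multiplicity q (a*d)) (multiplicity q (c*b)) \<le> multiplicity q (a*d + c*b)"
    using mult_add_ge[OF q nz] .
  have "multiplicity q (a*d) = multiplicity q a + multiplicity q d"
    using q ab cd by (simp add: md)
  moreover have "multiplicity q (c*b) = multiplicity q c + multiplicity q b"
    using q ab cd by (simp add: md)
  moreover have "vq q x = int (multiplicity q a) - int (multiplicity q b)"
    using vq_frac[OF q, of a b] ab by simp
  moreover have "vq q y = int (multiplicity q c) - int (multiplicity q d)"
    using vq_frac[OF q, of c d] cd by simp
  ultimately show ?thesis using m v1 by linarith
qed

lemma vq_uminus: "prime (q::int) \<Longrightarrow> vq q (- x) = vq q x"
proof (cases "x = 0")
  case False
  assume q: "prime q"
  have "vq q (-1) = 0" using vq_of_int[OF q, of "-1"] by simp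
  thus ?thesis using vq_mult[OF q, of "-1" x] False by simp
qed simp

lemma vq_strict:
  fixes q :: int
  assumes q: "prime q" and x: "x \<noteq> 0" and y: "y \<noteq> 0" and lt: "vq q x < vq q y"
  shows "x + y \<noteq> 0 \<and> vq q (x + y) = vq q x"
proof -
  have xy: "x + y \<noteq> 0"
  proof
    assume "x + y = 0" hence "y = -x" by (simp add: eq_neg_iff_add_eq_0)
    thus False using lt vq_uminus[OF q, of x] by simp
  qed
  have 1: "min (vq q x) (vq q y) \<le> vq q (x + y)" using vq_add[OF q x y xy] .
  have 2: "min (vq q (x+y)) (vq q (-y)) \<le> vq q ((x + y) + (-y))"
    using vq_add[OF q xy, of "-y"] y x by simp
  show ?thesis using 1 2 lt vq_uminus[OF q, of y] xy by auto
qed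



definition Wt :: "int \<Rightarrow> int \<Rightarrow> int \<Rightarrow> nat \<Rightarrow> rat \<Rightarrow> int" where
  "Wt q N w i c = N * vq q c + w * int i"

lemma good_add:
  fixes q N w T :: int and i :: nat
  assumes q: "prime q" and N: "N > 0"
    and x: "x = 0 \<or> Wt q N w i x \<ge> T" and y: "y = 0 \<or> Wt q N w i y \<ge> T"
  shows "x + y = 0 \<or> Wt q N w i (x + y) \<ge> T"
proof (cases "x = 0 \<or> y = 0 \<or> x + y = 0")
  case True thus ?thesis using x y by auto
next
  case False
  hence "min (vq q x) (vq q y) \<le> vq q (x + y)" using vq_add[OF q] by auto
  hence "N * min (vq q x) (vq q y) \<le> N * vq q (x + y)" using N by simp
  moreover have "N * min (vq q x) (vq q y) = min (N * vq q x) (N * vq q y)"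
    using N by (simp add: min_def)
  moreover have "T \<le> min (N * vq q x) (N * vq q y) + w * int i"
    using x y False unfolding Wt_def by simp
  ultimately have "T \<le> N * vq q (x + y) + w * int i" by linarith
  thus ?thesis unfolding Wt_def by simp
qed

lemma good_sum:
  fixes q N w T :: int and i :: nat
  assumes q: "prime q" and N: "N > 0" and A: "finite A"
    and all: "\<And>a. a \<in> A \<Longrightarrow> f a = 0 \<or> Wt q N w i (f a) \<ge> T"
  shows "sum f A = 0 \<or> Wt q N w i (sum f A) \<ge> T"
  using A all
proof (induction A rule: finite_induct)
  case empty then show ?case by simp
next
  case (insert a A)
  thus ?case using good_add[OF q N, where x="f a" and y="sum f A" and i=i and T=T and w=w] by simp
qed

lemma Wt_mult:
  fixes q :: int
  assumes q: "prime q" and "c \<noteq> 0" "d \<noteq> 0"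
  shows "Wt q N w (i + j) (c * d) = Wt q N w i c + Wt q N w j d"
  using vq_mult[OF q assms(2,3)] unfolding Wt_def by (simp add: algebra_simps)

definition minprop where
  "minprop q N w p \<mu> i0 \<longleftrightarrow> coeff p i0 \<noteq> 0 \<and> Wt q N w i0 (coeff p i0) = \<mu> \<and>
     (\<forall>i. coeff p i \<noteq> 0 \<longrightarrow> Wt q N w i (coeff p i) \<ge> \<mu>) \<and>
     (\<forall>i<i0. coeff p i \<noteq> 0 \<longrightarrow> Wt q N w i (coeff p i) > \<mu>)"

lemma min_exists:
  fixes p :: "rat poly"
  assumes "p \<noteq> 0"
  shows "\<exists>\<mu> i0. minprop q N w p \<mu> i0"
proof -
  define S where "S = (\<lambda>i. Wt q N w i (coeff p i)) ` {i. coeff p i \<noteq> 0}"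
  have "{i. coeff p i \<noteq> 0} \<subseteq> {..degree p}" using le_degree by auto
  hence fin: "finite S" unfolding S_def by (meson finite_atMost finite_imageI finite_subset)
  have "coeff p (degree p) \<noteq> 0" using assms by simp
  hence ne: "S \<noteq> {}" unfolding S_def by blast
  define \<mu> where "\<mu> = Min S"
  have "\<mu> \<in> S" unfolding \<mu>_def using fin ne by simp
  then obtain i1 where i1: "coeff p i1 \<noteq> 0" "Wt q N w i1 (coeff p i1) = \<mu>" unfolding S_def by auto
  have ge: "\<forall>i. coeff p i \<noteq> 0 \<longrightarrow> Wt q N w i (coeff p i) \<ge> \<mu>"
    unfolding \<mu>_def S_def using fin S_def by auto
  define i0 where "i0 = (LEAST i. coeff p i \<noteq> 0 \<and> Wt q N w i (coeff p i) = \<mu>)"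
  have i0: "coeff p i0 \<noteq> 0 \<and> Wt q N w i0 (coeff p i0) = \<mu>"
    unfolding i0_def by (rule LeastI[of _ i1]) (use i1 in auto)
  have "\<forall>i<i0. coeff p i \<noteq> 0 \<longrightarrow> Wt q N w i (coeff p i) > \<mu>"
  proof (intro allI impI)
    fix i assume "i < i0" "coeff p i \<noteq> 0"
    hence "\<not> (coeff p i \<noteq> 0 \<and> Wt q N w i (coeff p i) = \<mu>)"
      unfolding i0_def using not_less_Least by blast
    thus "Wt q N w i (coeff p i) > \<mu>" using ge \<open>coeff p i \<noteq> 0\<close> by force
  qed
  thus ?thesis unfolding minprop_def using i0 ge by blast
qed

lemma conv_all:
  fixes q :: int and g h :: "rat poly"
  assumes q: "prime q" and N: "N > 0"
    and mg: "minprop q N w g \<mu>g i0" and mh: "minprop q N w h \<mu>h j0"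
    and nz: "coeff (g*h) m \<noteq> 0"
  shows "Wt q N w m (coeff (g*h) m) \<ge> \<mu>g + \<mu>h"
proof -
  have "coeff (g*h) m = 0 \<or> Wt q N w m (coeff (g*h) m) \<ge> \<mu>g + \<mu>h"
    unfolding coeff_mult
  proof (rule good_sum[OF q N], simp)
    fix i assume "i \<in> {..m}"
    hence im: "i + (m - i) = m" by simp
    show "coeff g i * coeff h (m - i) = 0 \<or> \<mu>g + \<mu>h \<le> Wt q N w m (coeff g i * coeff h (m - i))"
    proof (cases "coeff g i = 0 \<or> coeff h (m - i) = 0")
      case False
      hence "Wt q N w m (coeff g i * coeff h (m - i)) = Wt q N w i (coeff g i) + Wt q N w (m-i) (coeff h (m-i))"
        using Wt_mult[OF q, of "coeff g i" "coeff h (m-i)" N w i "m-i"] im by simp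
      moreover have "Wt q N w i (coeff g i) \<ge> \<mu>g" using mg False unfolding minprop_def by blast
      moreover have "Wt q N w (m-i) (coeff h (m-i)) \<ge> \<mu>h" using mh False unfolding minprop_def by blast
      ultimately show ?thesis by simp
    qed simp
  qed
  thus ?thesis using nz by simp
qed

lemma conv_exact:
  fixes q :: int and g h :: "rat poly"
  assumes q: "prime q" and N: "N > 0"
    and mg: "minprop q N w g \<mu>g i0" and mh: "minprop q N w h \<mu>h j0"
  shows "coeff (g*h) (i0+j0) \<noteq> 0 \<and> Wt q N w (i0+j0) (coeff (g*h) (i0+j0)) = \<mu>g + \<mu>h"
proof -
  define m where "m = i0 + j0"
  define F where "F = (\<lambda>i. coeff g i * coeff h (m - i))"
  have i0m: "i0 \<in> {..m}" unfolding m_def by simp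
  have "sum F {..m} = F i0 + sum F ({..m} - {i0})"
    by (rule sum.remove) (simp_all add: m_def)
  hence split: "coeff (g*h) m = F i0 + sum F ({..m} - {i0})"
    unfolding coeff_mult F_def .
  have M: "F i0 \<noteq> 0" "Wt q N w m (F i0) = \<mu>g + \<mu>h"
  proof -
    have a: "coeff g i0 \<noteq> 0" "coeff h j0 \<noteq> 0" using mg mh unfolding minprop_def by auto
    have "m - i0 = j0" unfolding m_def by simp
    thus "F i0 \<noteq> 0" using a unfolding F_def by simp
    show "Wt q N w m (F i0) = \<mu>g + \<mu>h"
      using Wt_mult[OF q a, of N w] mg mh \<open>m - i0 = j0\<close> unfolding F_def minprop_def m_def by simp
  qed
  have rest: "sum F ({..m} - {i0}) = 0 \<or> Wt q N w m (sum F ({..m} - {i0})) \<ge> \<mu>g + \<mu>h + 1"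
  proof (rule good_sum[OF q N], simp)
    fix i assume iA: "i \<in> {..m} - {i0}"
    hence im: "i + (m - i) = m" by simp
    show "F i = 0 \<or> \<mu>g + \<mu>h + 1 \<le> Wt q N w m (F i)"
    proof (cases "coeff g i = 0 \<or> coeff h (m - i) = 0")
      case False
      hence W: "Wt q N w m (F i) = Wt q N w i (coeff g i) + Wt q N w (m-i) (coeff h (m-i))"
        using Wt_mult[OF q, of "coeff g i" "coeff h (m-i)" N w i "m-i"] im unfolding F_def by simp
      have g1: "Wt q N w i (coeff g i) \<ge> \<mu>g" using mg False unfolding minprop_def by blast
      have h1: "Wt q N w (m-i) (coeff h (m-i)) \<ge> \<mu>h" using mh False unfolding minprop_def by blast
      show ?thesis
      proof (cases "i < i0")
        case True
        hence "Wt q N w i (coeff g i) > \<mu>g" using mg False unfolding minprop_def by blast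
        thus ?thesis using W h1 by simp
      next
        case False': False
        hence "m - i < j0" using iA unfolding m_def by auto
        hence "Wt q N w (m-i) (coeff h (m-i)) > \<mu>h" using mh False unfolding minprop_def by blast
        thus ?thesis using W g1 by simp
      qed
    qed (auto simp: F_def)
  qed
  show ?thesis
  proof (cases "sum F ({..m} - {i0}) = 0")
    case True thus ?thesis using split M m_def by simp
  next
    case False
    hence "Wt q N w m (sum F ({..m} - {i0})) > Wt q N w m (F i0)" using rest M by simp
    hence "N * vq q (sum F ({..m} - {i0})) > N * vq q (F i0)" unfolding Wt_def by simp
    hence "vq q (sum F ({..m} - {i0})) > vq q (F i0)" using N by (simp add: mult_less_cancel_left)
    hence "F i0 + sum F ({..m} - {i0}) \<noteq> 0 \<and> vq q (F i0 + sum F ({..m} - {i0})) = vq q (F i0)"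
      using vq_strict[OF q M(1) False] by simp
    thus ?thesis using split M unfolding m_def Wt_def by simp
  qed
qed



lemma dumas:
  fixes q :: int and f g h :: "rat poly" and n :: nat and s :: int
  assumes q: "prime q" and n: "n > 0" and fgh: "f = g * h"
    and lg: "lead_coeff g = 1" and lh: "lead_coeff h = 1"
    and f0: "coeff f 0 \<noteq> 0" and vf0: "vq q (coeff f 0) = s"
    and fall: "\<And>i. coeff f i \<noteq> 0 \<Longrightarrow> s * int n \<le> int n * vq q (coeff f i) + s * int i"
    and df: "degree f = n"
  shows "int n * vq q (coeff g 0) = s * int (degree g)"
proof -
  have g0: "g \<noteq> 0" and h0: "h \<noteq> 0" using lg lh by auto
  have N: "int n > 0" using n by simp
  obtain \<mu>g i0 where mg: "minprop q (int n) s g \<mu>g i0" using min_exists[OF g0] by blast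
  obtain \<mu>h j0 where mh: "minprop q (int n) s h \<mu>h j0" using min_exists[OF h0] by blast
  have "Wt q (int n) s 0 (coeff f 0) \<ge> \<mu>g + \<mu>h" using conv_all[OF q N mg mh, of 0] f0 fgh by simp
  hence 1: "int n * s \<ge> \<mu>g + \<mu>h" using vf0 unfolding Wt_def by simp
  have "coeff f (i0+j0) \<noteq> 0 \<and> Wt q (int n) s (i0+j0) (coeff f (i0+j0)) = \<mu>g + \<mu>h"
    using conv_exact[OF q N mg mh] fgh by simp
  hence 2: "\<mu>g + \<mu>h \<ge> s * int n" using fall[of "i0+j0"] unfolding Wt_def by simp
  have v1: "vq q 1 = 0" using vq_of_int[OF q, of 1] by simp
  have allg: "\<forall>i. coeff g i \<noteq> 0 \<longrightarrow> Wt q (int n) s i (coeff g i) \<ge> \<mu>g" using mg unfolding minprop_def by blast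
  have "Wt q (int n) s (degree g) (coeff g (degree g)) \<ge> \<mu>g" using allg[rule_format, of "degree g"] lg by simp
  hence 3: "\<mu>g \<le> s * int (degree g)" using lg v1 unfolding Wt_def by simp
  have allh: "\<forall>i. coeff h i \<noteq> 0 \<longrightarrow> Wt q (int n) s i (coeff h i) \<ge> \<mu>h" using mh unfolding minprop_def by blast
  have "Wt q (int n) s (degree h) (coeff h (degree h)) \<ge> \<mu>h" using allh[rule_format, of "degree h"] lh by simp
  hence 4: "\<mu>h \<le> s * int (degree h)" using lh v1 unfolding Wt_def by simp
  have dgh: "degree g + degree h = n" using degree_mult_eq[OF g0 h0] fgh df by simp
  hence 5: "s * int n = s * int (degree g) + s * int (degree h)" by (metis distrib_left of_nat_add)
  have c0: "coeff f 0 = coeff g 0 * coeff h 0" using fgh coeff_mult_0 by simp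
  hence gz: "coeff g 0 \<noteq> 0" and hz: "coeff h 0 \<noteq> 0" using f0 by auto
  have "vq q (coeff f 0) = vq q (coeff g 0) + vq q (coeff h 0)" using c0 vq_mult[OF q gz hz] by simp
  hence 6: "int n * s = int n * vq q (coeff g 0) + int n * vq q (coeff h 0)" using vf0 by (simp add: distrib_left)
  have 7: "\<mu>g \<le> int n * vq q (coeff g 0)" using mg gz unfolding minprop_def Wt_def by fastforce
  have 8: "\<mu>h \<le> int n * vq q (coeff h 0)" using mh hz unfolding minprop_def Wt_def by fastforce
  have 9: "int n * s = s * int n" by simp
  show ?thesis using 1 2 3 4 5 6 7 8 9 by linarith
qed



lemma coeff_const_gen: "coeff [:c:] i = (if i = 0 then c else 0)"
  by (cases i) auto

lemma coeff_fpoly: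
  "coeff (fpoly n d R) i =
    (\<Sum>j\<in>{0..(n - 1) div 2}. if n - 2*j = i then
        (-1)^j * (of_nat n / of_nat (n - j)) * of_nat ((n - j) choose j) * (of_int (d^2 - R))^j else 0)
    - (if i = 0 then of_int (2 * d * (d^2 - R) ^ ((n - 1) div 2)) else 0)"
  unfolding fpoly_def Let_def coeff_diff coeff_sum coeff_monom coeff_const_gen by (rule refl)

lemma cc_int:
  assumes "j \<le> (n - 1) div 2" "odd n"
  shows "\<exists>z::int. (of_nat n / of_nat (n - j)) * of_nat ((n - j) choose j) = (of_int z :: rat)"
proof (cases "j = 0")
  case True
  have "n > 0" using assms by (cases n) auto
  thus ?thesis using True by (intro exI[of _ 1]) simp
next
  case False
  have "2 * ((n - 1) div 2) \<le> n - 1" by simp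
  moreover have "n > 0" using assms(2) by (cases n) auto
  ultimately have nj: "n - j > 0" using assms(1) by linarith
  have a: "j * ((n - j) choose j) = (n - j) * ((n - j - 1) choose (j - 1))"
    using times_binomial_minus1_eq[of j "n - j"] False by simp
  have "n * ((n - j) choose j) = (n - j) * (((n - j) choose j) + ((n - j - 1) choose (j - 1)))"
  proof -
    have "n = (n - j) + j" using nj by simp
    hence "n * ((n - j) choose j) = (n - j) * ((n - j) choose j) + j * ((n - j) choose j)"
      by (metis add_mult_distrib)
    thus ?thesis using a by (simp add: add_mult_distrib2)
  qed
  hence "(of_nat n :: rat) * of_nat ((n - j) choose j) = of_nat (n - j) * of_nat (((n - j) choose j) + ((n - j - 1) choose (j - 1)))"
    by (metis of_nat_mult)
  hence "(of_nat n / of_nat (n - j)) * of_nat ((n - j) choose j) = (of_nat (((n - j) choose j) + ((n - j - 1) choose (j - 1))) :: rat)"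
    using nj by (simp add: field_simps)
  thus ?thesis by (metis of_int_of_nat_eq)
qed



lemma fpoly_basic:
  assumes odd: "odd n" and n3: "n \<ge> 3"
  shows "coeff (fpoly n d R) n = 1" "\<And>i. i > n \<Longrightarrow> coeff (fpoly n d R) i = 0"
    "coeff (fpoly n d R) 0 = - of_int (2 * d * (d^2 - R) ^ ((n - 1) div 2))"
proof -
  define m where "m = (n - 1) div 2"
  have nm: "n = 2*m + 1" using odd unfolding m_def by presburger
  show "coeff (fpoly n d R) n = 1"
  proof -
    define X where "X = (\<lambda>j. (-1)^j * (of_nat n / of_nat (n - j)) * of_nat ((n - j) choose j) * (of_int (d^2 - R) :: rat)^j)"
    have "coeff (fpoly n d R) n = (\<Sum>j\<in>{0..m}. if n - 2*j = n then X j else 0)"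
      unfolding coeff_fpoly m_def[symmetric] X_def using n3 by simp
    also have "\<dots> = (\<Sum>j\<in>{0..m}. if j = 0 then X j else 0)"
      by (intro sum.cong) (auto simp: nm)
    also have "\<dots> = X 0" by simp
    also have "X 0 = 1" unfolding X_def using n3 by simp
    finally show ?thesis .
  qed
  show "\<And>i. i > n \<Longrightarrow> coeff (fpoly n d R) i = 0"
  proof -
    fix i assume "i > n"
    thus "coeff (fpoly n d R) i = 0" unfolding coeff_fpoly by (subst sum.neutral) auto
  qed
  show "coeff (fpoly n d R) 0 = - of_int (2 * d * (d^2 - R) ^ ((n - 1) div 2))"
    unfolding coeff_fpoly m_def[symmetric] by (subst sum.neutral) (auto simp: nm)
qed

lemma fpoly_val:
  fixes q :: int
  assumes odd: "odd n" and n3: "n \<ge> 3" and q: "prime q"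
    and qd: "\<not> q dvd 2 * d" and D0: "d^2 - R \<noteq> 0"
    and s: "s = int ((n - 1) div 2) * int (multiplicity q (d^2 - R))"
    and nz: "coeff (fpoly n d R) i \<noteq> 0"
  shows "s * int n \<le> int n * vq q (coeff (fpoly n d R) i) + s * int i"
proof -
  define m where "m = (n - 1) div 2"
  define D where "D = d^2 - R"
  define e where "e = multiplicity q D"
  have nm: "n = 2*m + 1" using odd unfolding m_def by presburger
  have pe: "prime_elem q" by (rule prime_imp_prime_elem[OF q])
  have D0': "D \<noteq> 0" using D0 D_def by simp
  have md2: "multiplicity q (2*d) = 0" using qd by (simp add: not_dvd_imp_multiplicity_0)
  have mDj: "\<And>j. multiplicity q (D^j) = j * e"
    unfolding e_def using prime_elem_multiplicity_power_distrib[OF pe D0'] by simp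
  show ?thesis
  proof (cases "i = 0")
    case True
    have c: "coeff (fpoly n d R) 0 = of_int (- (2 * d * D ^ m))"
      using fpoly_basic(3)[OF odd n3] unfolding m_def D_def by simp
    have z: "2 * d * D ^ m \<noteq> 0" using qd D0' by auto
    have "vq q (coeff (fpoly n d R) 0) = int (multiplicity q (2 * d * D ^ m))"
      unfolding c using vq_of_int[OF q, of "- (2 * d * D ^ m)"] z by simp
    also have "\<dots> = int m * int e" using md[OF q, of "2*d" "D^m"] z md2 mDj[of m] by auto
    finally show ?thesis using True s unfolding m_def e_def D_def by simp
  next
    case False
    define X where "X = (\<lambda>j. (-1)^j * (of_nat n / of_nat (n - j)) * of_nat ((n - j) choose j) * (of_int (d^2 - R) :: rat)^j)"
    have ci: "coeff (fpoly n d R) i = (\<Sum>j\<in>{0..m}. if n - 2*j = i then X j else 0)"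
      unfolding coeff_fpoly m_def[symmetric] X_def using False by simp
    have "coeff (fpoly n d R) i = 0 \<or> Wt q (int n) s i (coeff (fpoly n d R) i) \<ge> s * int n"
      unfolding ci
    proof (rule good_sum[OF q])
      show "0 < int n" using n3 by simp
      show "finite {0..m}" by simp
      fix j assume j: "j \<in> {0..m}"
      hence j: "j \<le> (n - 1) div 2" unfolding m_def by simp
      show "(if n - 2*j = i then X j else 0) = 0 \<or> s * int n \<le> Wt q (int n) s i (if n - 2*j = i then X j else 0)"
      proof (cases "n - 2*j = i")
        case ij: True
        obtain z where z: "(of_nat n / of_nat (n - j)) * of_nat ((n - j) choose j) = (of_int z :: rat)"
          using cc_int[OF j odd] by blast
        have eq: "X j = of_int (((-1)^j * z) * D^j)"
        proof -
          have "X j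
              = (-1) ^ j * ((rat_of_nat n / rat_of_nat (n - j)) * rat_of_nat (n - j choose j)) * rat_of_int (d\<^sup>2 - R) ^ j"
            unfolding X_def by (simp only: mult.assoc)
          also have "\<dots> = (-1) ^ j * rat_of_int z * rat_of_int (d\<^sup>2 - R) ^ j" by (simp only: z)
          also have "\<dots> = of_int (((-1)^j * z) * D^j)" unfolding D_def by simp
          finally show ?thesis .
        qed
        have disj: "X j = 0 \<or> s * int n \<le> Wt q (int n) s i (X j)"
        proof (cases "z = 0")
          case True thus ?thesis using eq by simp
        next
          case zF: False
          have nz2: "(-1)^j * z \<noteq> 0" using zF by simp
          have v: "vq q (of_int (((-1)^j * z) * D^j)) = int (multiplicity q ((-1)^j * z)) + int j * int e"
            using vq_of_int[OF q, of "((-1)^j * z) * D^j"] md[OF q nz2, of "D^j"] nz2 D0' mDj[of j] by simp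
          define V where "V = vq q (of_int (((-1)^j * z) * D^j))"
          have Vge: "V - int j * int e \<ge> 0" using v unfolding V_def by simp
          have ii: "int i = 2 * int m + 1 - 2 * int j" using ij j nm unfolding m_def by linarith
          have nn: "int n = 2 * int m + 1" using nm by simp
          have alg: "int n * V + s * int i - s * int n = int n * (V - int j * int e) + int j * int e"
            unfolding ii nn s m_def[symmetric] e_def D_def[symmetric] by (simp add: algebra_simps)
          have "int n * (V - int j * int e) \<ge> 0" using Vge by simp
          moreover have "int j * int e \<ge> 0" by simp
          ultimately have "s * int n \<le> int n * V + s * int i" using alg by linarith
          thus ?thesis unfolding eq Wt_def V_def by simp
        qed
        show ?thesis using disj ij by simp
      qed simp
    qed
    thus ?thesis using nz unfolding Wt_def by simp
  qed
qed

lemma fpoly_v0: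
  fixes q :: int
  assumes odd: "odd n" and n3: "n \<ge> 3" and q: "prime q"
    and qd: "\<not> q dvd 2 * d" and D0: "d^2 - R \<noteq> 0"
  shows "coeff (fpoly n d R) 0 \<noteq> 0"
    "vq q (coeff (fpoly n d R) 0) = int ((n - 1) div 2) * int (multiplicity q (d^2 - R))"
proof -
  define m where "m = (n - 1) div 2"
  define D where "D = d^2 - R"
  define e where "e = multiplicity q D"
  have pe: "prime_elem q" by (rule prime_imp_prime_elem[OF q])
  have D0': "D \<noteq> 0" using D0 D_def by simp
  have md2: "multiplicity q (2*d) = 0" using qd by (simp add: not_dvd_imp_multiplicity_0)
  have mDj: "\<And>j. multiplicity q (D^j) = j * e"
    unfolding e_def using prime_elem_multiplicity_power_distrib[OF pe D0'] by simp
  have c: "coeff (fpoly n d R) 0 = of_int (- (2 * d * D ^ m))"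
    using fpoly_basic(3)[OF odd n3] unfolding m_def D_def by simp
  have z: "2 * d * D ^ m \<noteq> 0" using qd D0' by auto
  show "coeff (fpoly n d R) 0 \<noteq> 0" using c z by simp
  have "vq q (coeff (fpoly n d R) 0) = int (multiplicity q (2 * d * D ^ m))"
    unfolding c using vq_of_int[OF q, of "- (2 * d * D ^ m)"] z by simp
  also have "\<dots> = int m * int e" using md[OF q, of "2*d" "D^m"] z md2 mDj[of m] by auto
  finally show "vq q (coeff (fpoly n d R) 0) = int ((n - 1) div 2) * int (multiplicity q (d^2 - R))"
    unfolding m_def e_def D_def .
qed



theorem proposition7:
  fixes n :: nat and d R :: int
  assumes "n \<ge> 3" and "odd n"
    and "d \<noteq> 0"
    and "\<not> (\<exists>k::int. R = k^2)"
    and "gcd d R = 1"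
    and "\<And>p. prime p \<Longrightarrow> p dvd n \<Longrightarrow>
           \<exists>q::int. prime q \<and> q \<ge> 3 \<and> odd (multiplicity q (d^2 - R))
                  \<and> \<not> (int p dvd int (multiplicity q (d^2 - R)))"
  shows "irreducible (fpoly n d R)"
proof -
  note n3 = assms(1) and odd = assms(2)
  define f where "f = fpoly n d R"
  define m where "m = (n - 1) div 2"
  have nm: "n = 2*m + 1" using odd unfolding m_def by presburger
  have D0: "d^2 - R \<noteq> 0"
  proof
    assume "d^2 - R = 0" hence "R = d^2" by simp
    thus False using assms(4) by blast
  qed
  have fn: "coeff f n = 1" unfolding f_def using fpoly_basic(1)[OF odd n3] .
  have degf: "degree f = n"
  proof (rule antisym)
    show "degree f \<le> n" unfolding f_def by (rule degree_le) (use fpoly_basic(2)[OF odd n3] in auto)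
    show "n \<le> degree f" using fn by (intro le_degree) simp
  qed
  have f0: "f \<noteq> 0" using fn by auto
  have cop: "coprime n m"
  proof -
    have "gcd m (2*m+1) = 1" using gcd_add_mult[of m 2 1] by simp
    thus ?thesis using nm by (simp add: coprime_iff_gcd_eq_1 gcd.commute)
  qed
  show "irreducible (fpoly n d R)"
    unfolding f_def[symmetric]
  proof (rule irreducibleI)
    show "f \<noteq> 0" by (rule f0)
    show "\<not> f dvd 1" using is_unit_iff_degree[OF f0] degf n3 by simp
    fix a b assume fab: "f = a * b"
    show "a dvd 1 \<or> b dvd 1"
    proof (rule ccontr)
      assume nu: "\<not> (a dvd 1 \<or> b dvd 1)"
      have a0: "a \<noteq> 0" and b0: "b \<noteq> 0" using fab f0 by auto
      have da: "degree a > 0" using nu is_unit_iff_degree[OF a0] by auto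
      have db: "degree b > 0" using nu is_unit_iff_degree[OF b0] by auto
      define k where "k = degree a"
      have kn: "k + degree b = n" using degree_mult_eq[OF a0 b0] fab degf k_def by simp
      define la where "la = lead_coeff a"
      have la0: "la \<noteq> 0" using a0 la_def by simp
      define g where "g = smult (inverse la) a"
      define h where "h = smult la b"
      have fgh: "f = g * h" unfolding g_def h_def fab using la0 by simp
      have lg: "lead_coeff g = 1" unfolding g_def la_def using la0 la_def by (simp add: lead_coeff_smult)
      have "lead_coeff f = 1" using fn degf by simp
      hence lh: "lead_coeff h = 1" using fgh lg by (simp add: lead_coeff_mult)
      have dg: "degree g = k" unfolding g_def k_def using la0 by simp
      have key: "\<And>p. prime p \<Longrightarrow> multiplicity p n \<le> multiplicity p k"
      proof -
        fix p :: nat assume p: "prime p"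
        show "multiplicity p n \<le> multiplicity p k"
        proof (cases "p dvd n")
          case False thus ?thesis by (simp add: not_dvd_imp_multiplicity_0)
        next
          case True
          then obtain q :: int where q: "prime q" "q \<ge> 3" "odd (multiplicity q (d^2 - R))"
            "\<not> (int p dvd int (multiplicity q (d^2 - R)))" using assms(6)[OF p] by blast
          define e where "e = multiplicity q (d^2 - R)"
          have e0: "e \<noteq> 0" using q(3) unfolding e_def by (metis even_zero)
          have qD: "q dvd d^2 - R"
          proof (rule ccontr)
            assume "\<not> q dvd d^2 - R"
            hence "e = 0" unfolding e_def by (simp add: not_dvd_imp_multiplicity_0)
            thus False using e0 by simp
          qed
          have qd: "\<not> q dvd 2 * d"
          proof
            assume h2: "q dvd 2 * d"
            have "\<not> q dvd 2"
            proof
              assume "q dvd 2"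
              hence "q \<le> 2" by (simp add: zdvd_imp_le)
              thus False using q(2) by simp
            qed
            hence qdd: "q dvd d" using h2 prime_dvd_mult_iff[of q 2 d] q(1) by blast
            hence "q dvd d^2" by (simp add: power2_eq_square)
            hence "q dvd d^2 - (d^2 - R)" using qD by (rule dvd_diff)
            hence "q dvd R" by simp
            hence "q dvd gcd d R" using qdd by simp
            hence "q dvd 1" using assms(5) by simp
            thus False using q(1) using not_prime_unit by blast
          qed
          define s where "s = int ((n - 1) div 2) * int e"
          have c0: "coeff f 0 \<noteq> 0" "vq q (coeff f 0) = s"
            using fpoly_v0[OF odd n3 q(1) qd D0] unfolding f_def s_def e_def by auto
          have fall: "\<And>i. coeff f i \<noteq> 0 \<Longrightarrow> s * int n \<le> int n * vq q (coeff f i) + s * int i"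
            using fpoly_val[OF odd n3 q(1) qd D0] unfolding f_def s_def e_def by blast
          have "int n * vq q (coeff g 0) = s * int (degree g)"
            by (rule dumas[OF q(1) _ fgh lg lh c0 fall degf]) (use n3 in simp)
          hence eqk: "s * int k = int n * vq q (coeff g 0)" unfolding dg by simp
          have "int n dvd s * int k" unfolding eqk by simp
          moreover have "s * int k = int (m * (e * k))" unfolding s_def m_def by simp
          ultimately have "int n dvd int (m * (e * k))" by simp
          hence "n dvd m * (e * k)" by (simp only: int_dvd_int_iff)
          hence ndv: "n dvd e * k" using cop by (simp add: coprime_dvd_mult_right_iff)
          have k0: "k \<noteq> 0" using da k_def by simp
          have "multiplicity p n \<le> multiplicity p (e * k)"
            using ndv e0 k0 by (intro dvd_imp_multiplicity_le) auto
          also have "\<dots> = multiplicity p e + multiplicity p k"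
            using e0 k0 p by (intro prime_elem_multiplicity_mult_distrib) auto
          also have "multiplicity p e = 0" using q(4) e_def by (simp add: not_dvd_imp_multiplicity_0)
          finally show ?thesis by simp
        qed
      qed
      have "n dvd k" using n3 by (intro multiplicity_le_imp_dvd key) auto
      moreover have "0 < k" "k < n" using da db kn k_def by auto
      ultimately show False by (simp add: nat_dvd_not_less)
    qed
  qed
qed


end
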